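(* Let $(\Gamma,M)$ be a connected E-GCM graph such that the root set $\Phi_M$ is infinite. Then for every proper subset $J\subsetneq I_n$, the set $\Phi_M^J:=\{\alpha\in\Phi_M^+ : \alpha\notin\mathrm{span}_{\mathbb{R}}\{\alpha_j\}_{j\in J}\}$ is infinite.
   Context: E-GCM $M=(M_{ij})_{i,j\in I_n}$: real, $M_{ii}=2$, $M_{ij}\le0$ for $i\ne j$, $M_{ij}\ne0\iff M_{ji}\ne0$, and nonzero $M_{ij}M_{ji}$ is either $\ge4$ or equals $4\cos^2(\pi/m)$ for an integer $m\ge3$. The E-GCM graph has nodes $\gamma_i$, adjacent iff $M_{ij}\ne0$. The Coxeter group $W$ has generators $s_i$ with $s_i^2=e$ and $(s_is_j)^{m_{ij}}=e$, where $m_{ij}=k$ if $M_{ij}M_{ji}=4\cos^2(\pi/k)$ ($k\ge2$ integer) and $m_{ij}=\infty$ if $M_{ij}M_{ji}\ge4$. $W$ acts on the real vector space $V$ with basis $(\alpha_i)_{i\in I_n}$ by $s_i.\alpha_j=\alpha_j-M_{ij}\alpha_i$. $\Phi_M=\{w.\alpha_i: w\in W, i\in I_n\}$ and $\Phi_M^+$ is the set of roots with all coefficients nonnegative in the basis $(\alpha_i)$. *)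

theory Defs
  imports "HOL-Analysis.Analysis"
begin

text \<open>Index set I_n = {..<n}. The matrix M is a function nat => nat => real (only entries
 with indices < n matter). Vectors of V are functions nat => real supported on {..<n};
 alpha i is the i-th basis vector.\<close>

definition egcm :: "nat \<Rightarrow> (nat \<Rightarrow> nat \<Rightarrow> real) \<Rightarrow> bool" where
  "egcm n M \<longleftrightarrow>
     (\<forall>i<n. M i i = 2) \<and>
     (\<forall>i<n. \<forall>j<n. i \<noteq> j \<longrightarrow> M i j \<le> 0) \<and>
     (\<forall>i<n. \<forall>j<n. M i j \<noteq> 0 \<longleftrightarrow> M j i \<noteq> 0) \<and>
     (\<forall>i<n. \<forall>j<n. M i j * M j i \<noteq> 0 \<longrightarrow>
        (M i j * M j i \<ge> 4 \<or> (\<exists>m::nat. m \<ge> 3 \<and> M i j * M j i = 4 * (cos (pi / real m))\<^sup>2)))"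

definition egcm_edges :: "nat \<Rightarrow> (nat \<Rightarrow> nat \<Rightarrow> real) \<Rightarrow> (nat \<times> nat) set" where
  "egcm_edges n M = {(i, j). i < n \<and> j < n \<and> i \<noteq> j \<and> M i j \<noteq> 0}"

definition egcm_connected :: "nat \<Rightarrow> (nat \<Rightarrow> nat \<Rightarrow> real) \<Rightarrow> bool" where
  "egcm_connected n M \<longleftrightarrow> (\<forall>i<n. \<forall>j<n. (i, j) \<in> (egcm_edges n M)\<^sup>*)"

definition alpha :: "nat \<Rightarrow> nat \<Rightarrow> real" where
  "alpha i = (\<lambda>k. if k = i then 1 else 0)"

text \<open>Simple reflection s_i acting on V: linear extension of
  s_i.alpha_j = alpha_j - M i j alpha_i.\<close>
definition refl :: "nat \<Rightarrow> (nat \<Rightarrow> nat \<Rightarrow> real) \<Rightarrow> nat \<Rightarrow> (nat \<Rightarrow> real) \<Rightarrow> (nat \<Rightarrow> real)" where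
  "refl n M i v = (\<lambda>k. v k - (if k = i then (\<Sum>j<n. M i j * v j) else 0))"

text \<open>Root set Phi_M = W-orbit of the simple roots; since W is generated by the
  involutions s_i, this is the closure of {alpha_i} under the s_i.\<close>
inductive_set roots :: "nat \<Rightarrow> (nat \<Rightarrow> nat \<Rightarrow> real) \<Rightarrow> (nat \<Rightarrow> real) set"
  for n M where
  simple: "i < n \<Longrightarrow> alpha i \<in> roots n M"
| reflect: "v \<in> roots n M \<Longrightarrow> i < n \<Longrightarrow> refl n M i v \<in> roots n M"

definition pos_roots :: "nat \<Rightarrow> (nat \<Rightarrow> nat \<Rightarrow> real) \<Rightarrow> (nat \<Rightarrow> real) set" where
  "pos_roots n M = {v \<in> roots n M. \<forall>k<n. v k \<ge> 0}"

definition span_simple :: "nat set \<Rightarrow> (nat \<Rightarrow> real) set" where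
  "span_simple J = {v. \<exists>c. v = (\<lambda>k. \<Sum>j\<in>J. c j * alpha j k)}"

end

theory Submission
  imports Defs "Jordan_Normal_Form.Determinant"
begin

definition act :: "nat \<Rightarrow> (nat \<Rightarrow> nat \<Rightarrow> real) \<Rightarrow> nat list \<Rightarrow> (nat \<Rightarrow> real) \<Rightarrow> (nat \<Rightarrow> real)" where
  "act n M w = foldr (\<lambda>i f. refl n M i \<circ> f) w id"

lemma act_Nil[simp]: "act n M [] v = v" by (simp add: act_def)
lemma act_Cons[simp]: "act n M (i#w) v = refl n M i (act n M w v)" by (simp add: act_def)
lemma act_append: "act n M (u@w) v = act n M u (act n M w v)"
  by (induction u) auto
lemma act_append_fun: "act n M (u@w) = act n M u \<circ> act n M w"
  by (rule ext) (simp add: act_append)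

definition wd :: "nat \<Rightarrow> nat list \<Rightarrow> bool" where "wd n w \<longleftrightarrow> set w \<subseteq> {..<n}"

definition red :: "nat \<Rightarrow> (nat \<Rightarrow> nat \<Rightarrow> real) \<Rightarrow> nat list \<Rightarrow> bool" where
  "red n M w \<longleftrightarrow> wd n w \<and> (\<forall>u. wd n u \<and> act n M u = act n M w \<longrightarrow> length w \<le> length u)"

lemma refl_lin: "refl n M i (\<lambda>k. c * u k + d * v k) = (\<lambda>k. c * refl n M i u k + d * refl n M i v k)"
  by (rule ext) (simp add: refl_def sum.distrib sum_distrib_left algebra_simps)

lemma act_lin: "act n M w (\<lambda>k. c * u k + d * v k) = (\<lambda>k. c * act n M w u k + d * act n M w v k)"
  by (induction w) (auto simp: refl_lin)

lemma refl_invol: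
  assumes "M i i = 2" "i < n"
  shows "refl n M i (refl n M i v) = v"
proof (rule ext)
  fix k
  let ?f = "\<Sum>j<n. M i j * v j"
  have "(\<Sum>j<n. M i j * refl n M i v j) = (\<Sum>j<n. M i j * v j - (if j = i then M i j * ?f else 0))"
    by (rule sum.cong) (auto simp: refl_def algebra_simps)
  also have "\<dots> = ?f - M i i * ?f" using assms(2) by (simp add: sum_subtractf)
  finally have "(\<Sum>j<n. M i j * refl n M i v j) = - ?f" using assms(1) by simp
  then show "refl n M i (refl n M i v) k = v k"
    by (simp add: refl_def)
qed

definition Rm :: "nat \<Rightarrow> (nat \<Rightarrow> nat \<Rightarrow> real) \<Rightarrow> nat \<Rightarrow> real Matrix.mat" where
  "Rm n M i = Matrix.mat n n (\<lambda>(r,c). (if r = c then 1 else 0) - (if r = i then M i c else 0))"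

definition Wm :: "nat \<Rightarrow> (nat \<Rightarrow> nat \<Rightarrow> real) \<Rightarrow> nat list \<Rightarrow> real Matrix.mat" where
  "Wm n M w = foldr (\<lambda>i A. Rm n M i * A) w (1\<^sub>m n)"

definition vc :: "nat \<Rightarrow> (nat \<Rightarrow> real) \<Rightarrow> real Matrix.vec" where
  "vc n v = Matrix.vec n v"

lemma Rm_carrier[simp]: "Rm n M i \<in> carrier_mat n n" by (simp add: Rm_def)
lemma Wm_carrier[simp]: "Wm n M w \<in> carrier_mat n n"
  by (induction w) (auto simp: Wm_def intro!: mult_carrier_mat[OF Rm_carrier])

lemma sum_delta_mult: "(\<Sum>j<(n::nat). f j * (if k = j then 1 else 0)) = (if k < n then f k else (0::real))"
proof -
  have "(\<Sum>j<n. f j * (if k = j then 1 else 0)) = (\<Sum>j<n. if k = j then f j else 0)"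
    by (rule sum.cong) auto
  also have "\<dots> = (if k < n then f k else 0)" by (simp add: sum.delta')
  finally show ?thesis .
qed
lemma Wm_Cons: "Wm n M (i#w) = Rm n M i * Wm n M w" by (simp add: Wm_def)

lemma vc_refl: "vc n (refl n M i v) = Rm n M i *\<^sub>v vc n v"
proof (rule eq_vecI)
  fix k assume k: "k < dim_vec (Rm n M i *\<^sub>v vc n v)"
  then have kn: "k < n" by (simp add: Rm_def)
  have "(Rm n M i *\<^sub>v vc n v) $ k = (\<Sum>j<n. ((if k = j then 1 else 0) - (if k = i then M i j else 0)) * v j)"
    using kn by (simp add: Rm_def vc_def scalar_prod_def lessThan_atLeast0)
  also have "\<dots> = (\<Sum>j<n. v j * (if k = j then 1 else 0) - (if k = i then M i j * v j else 0))"
    by (rule sum.cong) (auto simp: algebra_simps)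
  also have "\<dots> = (\<Sum>j<n. v j * (if k = j then 1 else 0)) - (\<Sum>j<n. if k = i then M i j * v j else 0)"
    by (rule sum_subtractf)
  also have "\<dots> = refl n M i v k" using kn by (cases "k = i") (simp_all add: refl_def sum_delta_mult)
  finally show "vc n (refl n M i v) $ k = (Rm n M i *\<^sub>v vc n v) $ k" using kn by (simp add: vc_def)
qed (simp add: vc_def Rm_def)

lemma vc_act: "vc n (act n M w v) = Wm n M w *\<^sub>v vc n v"
proof (induction w)
  case Nil then show ?case by (simp add: Wm_def vc_def)
next
  case (Cons i w)
  have "vc n (act n M (i#w) v) = Rm n M i *\<^sub>v (Wm n M w *\<^sub>v vc n v)"
    using Cons by (simp add: vc_refl)
  also have "\<dots> = Wm n M (i#w) *\<^sub>v vc n v"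
    by (simp add: Wm_Cons vc_def assoc_mult_mat_vec[of _ n n _ n])
  finally show ?case .
qed

lemma mat_alpha: assumes "A \<in> carrier_mat n n" "r < n" "c < n"
  shows "(A *\<^sub>v vc n (alpha c)) $ r = A $$ (r,c)"
proof -
  have "(A *\<^sub>v vc n (alpha c)) $ r = (\<Sum>j<n. A $$ (r,j) * (if c = j then 1 else 0))"
    using assms by (auto simp: vc_def scalar_prod_def alpha_def lessThan_atLeast0 intro!: sum.cong)
  also have "\<dots> = A $$ (r,c)" using assms by (simp add: sum_delta_mult)
  finally show ?thesis .
qed

lemma det_Rm: assumes "i < n" "M i i = 2" shows "Determinant.det (Rm n M i) = -1"
proof -
  have lap: "Determinant.det (Rm n M i) = (\<Sum>r<n. Rm n M i $$ (r,i) * cofactor (Rm n M i) r i)"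
    by (rule laplace_expansion_column[OF Rm_carrier assms(1)])
  also have "\<dots> = (\<Sum>r<n. if r = i then - cofactor (Rm n M i) r i else 0)"
    using assms by (intro sum.cong) (auto simp: Rm_def)
  also have "\<dots> = - cofactor (Rm n M i) i i" using assms by simp
  also have "mat_delete (Rm n M i) i i = 1\<^sub>m (n-1)"
    by (rule eq_matI) (auto simp: mat_delete_def Rm_def)
  then have "cofactor (Rm n M i) i i = 1" by (simp add: cofactor_def)
  finally show ?thesis by simp
qed

lemma det_Wm: assumes "wd n w" "\<forall>i<n. M i i = 2" shows "Determinant.det (Wm n M w) = (-1) ^ length w"
  using assms
proof (induction w)
  case Nil then show ?case by (simp add: Wm_def)
next
  case (Cons i w)
  then have "wd n w" "i < n" by (auto simp: wd_def)
  then show ?case using Cons by (simp add: Wm_Cons det_mult[OF Rm_carrier Wm_carrier] det_Rm)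
qed

lemma parity:
  assumes "wd n u" "wd n w" "\<forall>i<n. M i i = 2" "act n M u = act n M w"
  shows "even (length u) = even (length w)"
proof -
  have "Wm n M u = Wm n M w"
  proof (rule eq_matI)
    fix r c assume "r < dim_row (Wm n M w)" "c < dim_col (Wm n M w)"
    then have rc: "r < n" "c < n" using Wm_carrier[of n M w] by auto
    have "Wm n M u $$ (r,c) = (Wm n M u *\<^sub>v vc n (alpha c)) $ r" using rc by (simp add: mat_alpha)
    also have "\<dots> = vc n (act n M u (alpha c)) $ r" by (simp add: vc_act)
    also have "\<dots> = vc n (act n M w (alpha c)) $ r" using assms(4) by simp
    also have "\<dots> = (Wm n M w *\<^sub>v vc n (alpha c)) $ r" by (simp add: vc_act)
    also have "\<dots> = Wm n M w $$ (r,c)" using rc by (simp add: mat_alpha)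
    finally show "Wm n M u $$ (r,c) = Wm n M w $$ (r,c)" .
  qed (simp_all add: carrier_matD[OF Wm_carrier])
  then have "(-1::real) ^ length u = (-1) ^ length w"
    using det_Wm[of n u M] det_Wm[of n w M] assms by metis
  then show ?thesis by (metis neg_one_even_power neg_one_odd_power one_neq_neg_one)
qed

lemma egcm_diag: "egcm n M \<Longrightarrow> i < n \<Longrightarrow> M i i = 2" by (simp add: egcm_def)
lemma egcm_diag': "egcm n M \<Longrightarrow> \<forall>i<n. M i i = 2" by (simp add: egcm_def)
lemma egcm_off: "egcm n M \<Longrightarrow> i < n \<Longrightarrow> j < n \<Longrightarrow> i \<noteq> j \<Longrightarrow> M i j \<le> 0" by (simp add: egcm_def)

lemma refl_neg: "refl n M i (\<lambda>k. - v k) = (\<lambda>k. - refl n M i v k)"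
  by (rule ext) (simp add: refl_def sum_negf)

lemma act_neg: "act n M w (\<lambda>k. - v k) = (\<lambda>k. - act n M w v k)"
  by (induction w) (auto simp: refl_neg)

lemma refl_alpha_self: "i < n \<Longrightarrow> M i i = 2 \<Longrightarrow> refl n M i (alpha i) = (\<lambda>k. - alpha i k)"
proof (rule ext)
  fix k assume a: "i < n" "M i i = 2"
  have "(\<Sum>j<n. M i j * alpha i j) = (\<Sum>j<n. M i j * (if i = j then 1 else 0))"
    by (rule sum.cong) (auto simp: alpha_def)
  also have "\<dots> = 2" using a by (simp add: sum_delta_mult)
  finally show "refl n M i (alpha i) k = - alpha i k" by (simp add: refl_def alpha_def)
qed

lemma wd_simps[simp]: "wd n [] " "wd n (i#w) \<longleftrightarrow> i < n \<and> wd n w" "wd n (u@w) \<longleftrightarrow> wd n u \<and> wd n w"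
  by (auto simp: wd_def)

lemma roots_act: "v \<in> roots n M \<Longrightarrow> \<exists>w i. wd n w \<and> i < n \<and> v = act n M w (alpha i)"
proof (induction rule: roots.induct)
  case (simple i) then show ?case by (intro exI[of _ "[]"] exI[of _ i]) auto
next
  case (reflect v i)
  then obtain w j where "wd n w" "j < n" "v = act n M w (alpha j)" by blast
  then show ?case using reflect by (intro exI[of _ "i#w"] exI[of _ j]) auto
qed

lemma roots_neg: assumes "egcm n M" shows "v \<in> roots n M \<Longrightarrow> (\<lambda>k. - v k) \<in> roots n M"
proof (induction rule: roots.induct)
  case (simple i)
  then have "refl n M i (alpha i) \<in> roots n M" by (intro roots.intros)
  then show ?case using refl_alpha_self[of i n M] egcm_diag[OF assms] simple by simp
next
  case (reflect v i)
  then show ?case using roots.reflect[OF reflect.IH reflect.hyps(2)] refl_neg[of n M i v] by simp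
qed

lemma roots_support: "v \<in> roots n M \<Longrightarrow> k \<ge> n \<Longrightarrow> v k = 0"
  by (induction rule: roots.induct) (auto simp: alpha_def refl_def)

lemma refl_zero: "refl n M i (\<lambda>k. 0) = (\<lambda>k. 0)" by (rule ext) (simp add: refl_def)

lemma roots_nonzero: assumes "egcm n M" shows "v \<in> roots n M \<Longrightarrow> v \<noteq> (\<lambda>k. 0)"
proof (induction rule: roots.induct)
  case (simple i) then show ?case by (auto simp: alpha_def fun_eq_iff)
next
  case (reflect v i)
  show ?case
  proof
    assume "refl n M i v = (\<lambda>k. 0)"
    then have "refl n M i (refl n M i v) = (\<lambda>k. 0)" by (simp add: refl_zero)
    then show False using refl_invol[where i=i and M=M and n=n and v=v] egcm_diag[OF assms reflect.hyps(2)] reflect by simp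
  qed
qed

lemma roots_pos_coord: assumes "egcm n M" "v \<in> roots n M" "\<forall>k<n. v k \<ge> 0"
  shows "\<exists>k<n. v k > 0"
proof (rule ccontr)
  assume "\<not> ?thesis"
  then have "\<forall>k. v k = 0" using assms(3) roots_support[OF assms(2)] by (metis less_eq_real_def not_le)
  then show False using roots_nonzero[OF assms(1,2)] by auto
qed

lemma red_wd: "red n M w \<Longrightarrow> wd n w" by (simp add: red_def)

lemma exists_red: assumes "wd n w" shows "\<exists>u. red n M u \<and> act n M u = act n M w"
proof -
  let ?P = "\<lambda>u. wd n u \<and> act n M u = act n M w"
  obtain u where "?P u" "\<forall>y. ?P y \<longrightarrow> length u \<le> length y"
    using ex_has_least_nat[where P="?P" and k=w and m=length] assms by blast
  then show ?thesis by (auto simp: red_def)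
qed

lemma red_append: assumes "red n M (u@v)" shows "red n M u" "red n M v"
proof -
  have wd: "wd n u" "wd n v" using assms by (auto simp: red_def)
  show "red n M u" unfolding red_def
  proof (intro conjI allI impI)
    fix u' assume a: "wd n u' \<and> act n M u' = act n M u"
    then have e: "act n M (u'@v) = act n M (u@v)" by (simp add: act_append_fun)
    have "wd n (u'@v)" using a wd by simp
    then have "length (u@v) \<le> length (u'@v)" using assms e unfolding red_def by blast
    then show "length u \<le> length u'" by simp
  qed (rule wd)
  show "red n M v" unfolding red_def
  proof (intro conjI allI impI)
    fix v' assume a: "wd n v' \<and> act n M v' = act n M v"
    then have e: "act n M (u@v') = act n M (u@v)" by (simp add: act_append_fun)
    have "wd n (u@v')" using a wd by simp
    then have "length (u@v) \<le> length (u@v')" using assms e unfolding red_def by blast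
    then show "length v \<le> length v'" by simp
  qed (rule wd)
qed

lemma red_le: "red n M w \<Longrightarrow> wd n u \<Longrightarrow> act n M u = act n M w \<Longrightarrow> length w \<le> length u"
  by (simp add: red_def)

lemma red_equiv: assumes "red n M w" "wd n u" "act n M u = act n M w" "length u = length w"
  shows "red n M u"
  using assms by (auto simp: red_def)

lemma act_ss: assumes "egcm n M" "s < n" shows "act n M (u@[s,s]@v) = act n M (u@v)"
proof -
  have h: "refl n M s (refl n M s x) = x" for x
    using refl_invol[where i=s and M=M and n=n] egcm_diag[OF assms] assms(2) by blast
  show ?thesis by (rule ext) (simp add: act_append h)
qed

lemma act_ss': assumes "egcm n M" "s < n" shows "act n M (u@[s,s]) = act n M u"
  using act_ss[OF assms, of u "[]"] by simp

lemma parity_red: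
  assumes "egcm n M" "red n M w" "s < n" "\<not> red n M (w@[s])"
  shows "\<exists>u. wd n u \<and> act n M u = act n M (w@[s]) \<and> length u + 1 = length w"
proof -
  have wdw: "wd n w" using assms(2) by (rule red_wd)
  then have "wd n (w@[s])" using assms(3) by simp
  then obtain u where u: "wd n u" "act n M u = act n M (w@[s])" "length u < length w + 1"
    using assms(4) unfolding red_def by force
  have "even (length u) = even (length (w@[s]))"
    using parity[OF u(1) _ egcm_diag'[OF assms(1)] u(2)] wdw assms(3) by simp
  then have ne: "length u \<noteq> length w" by auto
  have "act n M (u@[s]) = act n M ((w@[s])@[s])" by (simp only: act_append_fun u(2))
  also have "\<dots> = act n M (w@[s,s])" by simp
  also have "\<dots> = act n M w" using act_ss'[OF assms(1,3)] by simp
  finally have e: "act n M (u@[s]) = act n M w" .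
  have "wd n (u@[s])" using u(1) assms(3) by simp
  then have "length w \<le> length (u@[s])" using assms(2) e unfolding red_def by blast
  then show ?thesis using u ne by (intro exI[of _ u]) auto
qed

fun cdk :: "real \<Rightarrow> real \<Rightarrow> nat \<Rightarrow> real \<times> real" where
  "cdk a b 0 = (1, 0)"
| "cdk a b (Suc k) = (if even k then (fst (cdk a b k), b * fst (cdk a b k) - snd (cdk a b k))
                      else (a * snd (cdk a b k) - fst (cdk a b k), snd (cdk a b k)))"

fun ee :: "real \<Rightarrow> nat \<Rightarrow> real" where
  "ee y 0 = 0"
| "ee y (Suc 0) = 1"
| "ee y (Suc (Suc k)) = y * ee y (Suc k) - ee y k"

lemma cdk_closed:
  assumes "y > 0" "y * y = a * b"
  shows "cdk a b k = (if even k then (ee y (Suc k), b / y * ee y k) else (ee y k, b / y * ee y (Suc k)))"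
proof (induction k)
  case 0 then show ?case by simp
next
  case (Suc k)
  show ?case
  proof (cases "even k")
    case True
    then have "cdk a b k = (ee y (Suc k), b / y * ee y k)" using Suc by simp
    then show ?thesis using True assms by (simp add: field_simps)
  next
    case False
    then have h: "cdk a b k = (ee y k, b / y * ee y (Suc k))" using Suc by simp
    have "a * (b / y * ee y (Suc k)) = y * ee y (Suc k)"
      using assms by (simp add: field_simps)
    then show ?thesis using False h by simp
  qed
qed

lemma ee_big: assumes "y \<ge> 2" shows "0 \<le> ee y k \<and> ee y k \<le> ee y (Suc k)"
proof (induction k rule: nat_less_induct)
  case (1 k)
  show ?case
  proof (cases k)
    case 0 then show ?thesis by simp
  next
    case (Suc j)
    then have ih: "0 \<le> ee y j \<and> ee y j \<le> ee y (Suc j)" using 1 by simp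
    have "ee y (Suc (Suc j)) - ee y (Suc j) = (y - 2) * ee y (Suc j) + (ee y (Suc j) - ee y j)"
      by (simp add: algebra_simps)
    moreover have "(y - 2) * ee y (Suc j) \<ge> 0" using assms ih by simp
    ultimately show ?thesis unfolding \<open>k = Suc j\<close> using ih by linarith
  qed
qed

lemma ee_sin:
  assumes "sin th \<noteq> 0"
  shows "ee (2 * cos th) k = sin (real k * th) / sin th"
proof (induction k rule: nat_less_induct)
  case (1 k)
  show ?case
  proof (cases k)
    case 0 then show ?thesis by simp
  next
    case (Suc j)
    show ?thesis
    proof (cases j)
      case 0 then show ?thesis using Suc assms by simp
    next
      case (Suc i)
      have ih1: "ee (2 * cos th) (Suc i) = sin (real (Suc i) * th) / sin th" using 1 Suc \<open>k = Suc j\<close> by simp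
      have ih0: "ee (2 * cos th) i = sin (real i * th) / sin th" using 1 Suc \<open>k = Suc j\<close> by simp
      have "sin (real (Suc (Suc i)) * th) = 2 * cos th * sin (real (Suc i) * th) - sin (real i * th)"
      proof -
        define x where "x = real (Suc i) * th"
        have a: "real (Suc (Suc i)) * th = x + th" and b: "real i * th = x - th"
          unfolding x_def by (simp_all add: algebra_simps)
        show ?thesis unfolding a b x_def[symmetric] using sin_add[of x th] sin_diff[of x th] by (simp add: algebra_simps)
      qed
      then show ?thesis using ih1 ih0 Suc \<open>k = Suc j\<close> assms by (simp add: field_simps)
    qed
  qed
qed

lemma cdk_nonneg_big:
  assumes "a \<ge> 0" "b \<ge> 0" "a * b \<ge> 4"
  shows "fst (cdk a b k) \<ge> 0 \<and> snd (cdk a b k) \<ge> 0"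
proof -
  define y where "y = sqrt (a * b)"
  have y2: "y \<ge> 2" using assms unfolding y_def by (metis real_sqrt_four real_sqrt_le_iff)
  have yy: "y * y = a * b" using assms unfolding y_def by simp
  have "y > 0" using y2 by simp
  note cl = cdk_closed[OF this yy, of k]
  have "ee y k \<ge> 0" "ee y (Suc k) \<ge> 0" using ee_big[OF y2, of k] ee_big[OF y2, of "Suc k"] by auto
  then show ?thesis using cl assms \<open>y > 0\<close> by (auto simp: split: if_splits)
qed

lemma cdk_cos:
  assumes "a \<ge> 0" "b \<ge> 0" "m \<ge> 3" "a * b = 4 * (cos (pi / real m))\<^sup>2"
  shows "\<forall>k<m. fst (cdk a b k) \<ge> 0 \<and> snd (cdk a b k) \<ge> 0"
    and "cdk a b m = (- fst (cdk a b (m - 1)), - snd (cdk a b (m - 1)))"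
proof -
  define th where "th = pi / real m"
  have mpos: "real m > 0" using assms by simp
  have th0: "0 < th" "th < pi" using assms unfolding th_def by (auto simp: field_simps)
  have th2: "th < pi / 2" using assms unfolding th_def by (auto simp: field_simps)
  have sth: "sin th > 0" using th0 by (simp add: sin_gt_zero)
  have cth: "cos th > 0" using th0 th2 by (simp add: cos_gt_zero)
  define y where "y = 2 * cos th"
  have y0: "y > 0" using cth unfolding y_def by simp
  have yy: "y * y = a * b" using assms unfolding y_def th_def by (simp add: power2_eq_square)
  have ee: "ee y j = sin (real j * th) / sin th" for j using ee_sin[of th j] sth unfolding y_def by simp
  have eenn: "ee y j \<ge> 0" if "j \<le> m" for j
  proof -
    have "real j * th \<le> pi" using that mpos unfolding th_def by (simp add: field_simps)
    then have "sin (real j * th) \<ge> 0" using th0 by (intro sin_ge_zero) auto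
    then show ?thesis using ee sth by simp
  qed
  have mth: "real m * th = pi" using mpos unfolding th_def by simp
  have eem: "ee y m = 0" using ee[of m] mth by simp
  have eem1: "ee y (Suc m) = -1"
  proof -
    have "real (Suc m) * th = pi + th" using mth by (simp add: algebra_simps)
    then show ?thesis using ee[of "Suc m"] sth by simp
  qed
  have eemm: "ee y (m - 1) = 1"
  proof -
    have "real (m - 1) * th = pi - th" using mth assms by (simp add: of_nat_diff algebra_simps)
    then show ?thesis using ee[of "m - 1"] sth by simp
  qed
  note cl = cdk_closed[OF y0 yy]
  show "\<forall>k<m. fst (cdk a b k) \<ge> 0 \<and> snd (cdk a b k) \<ge> 0"
  proof (intro allI impI)
    fix k assume "k < m"
    then have "ee y k \<ge> 0" "ee y (Suc k) \<ge> 0" using eenn by auto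
    then show "fst (cdk a b k) \<ge> 0 \<and> snd (cdk a b k) \<ge> 0" using cl[of k] assms y0 by auto
  qed
  have sm: "Suc (m - 1) = m" using assms by simp
  show "cdk a b m = (- fst (cdk a b (m - 1)), - snd (cdk a b (m - 1)))"
  proof (cases "even m")
    case True
    then have "odd (m - 1)" using assms by simp
    then show ?thesis using cl[of m] cl[of "m - 1"] True sm eem eem1 eemm by simp
  next
    case False
    then have "even (m - 1)" using assms by simp
    then show ?thesis using cl[of m] cl[of "m - 1"] False sm eem eem1 eemm by simp
  qed
qed

primrec alt :: "nat \<Rightarrow> nat \<Rightarrow> nat \<Rightarrow> nat list" where
  "alt s t 0 = []"
| "alt s t (Suc k) = (if even k then t else s) # alt s t k"

lemma alt_snoc: "alt s t (Suc k) = alt t s k @ [t]"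
  by (induction k) auto

lemma alt_len[simp]: "length (alt s t k) = k" by (induction k) auto
lemma alt_set: "set (alt s t k) \<subseteq> {s,t}" by (induction k) auto
lemma wd_alt: "s < n \<Longrightarrow> t < n \<Longrightarrow> wd n (alt s t k)"
  using alt_set[of s t k] by (auto simp: wd_def)

lemma y_alt:
  assumes "egcm n M" "s < n" "t < n" "s \<noteq> t"
  shows "set y \<subseteq> {s,t} \<Longrightarrow> red n M (y@[s]) \<Longrightarrow> y = alt s t (length y)"
proof (induction y)
  case Nil then show ?case by simp
next
  case (Cons c y')
  have "red n M ([c] @ (y'@[s]))" using Cons.prems by simp
  then have "red n M (y'@[s])" by (rule red_append(2))
  then have y': "y' = alt s t (length y')" using Cons by simp
  define k where "k = length y'"
  have cst: "c \<in> {s,t}" using Cons.prems by simp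
  have "c = (if even k then t else s)"
  proof (rule ccontr)
    assume nc: "c \<noteq> (if even k then t else s)"
    have "\<exists>z. y'@[s] = c # z"
    proof (cases k)
      case 0 then have "y' = []" using k_def by simp
      then show ?thesis using nc cst 0 assms(4) by auto
    next
      case (Suc k')
      then have "y' = (if even k' then t else s) # alt s t k'" using y' k_def by simp
      then show ?thesis using nc cst Suc assms(4) by (auto split: if_splits)
    qed
    then obtain z where z: "y'@[s] = c # z" by blast
    have cn: "c < n" using cst assms by auto
    have wz: "wd n z" using red_wd[OF \<open>red n M (y'@[s])\<close>] z by simp
    have "act n M ((c#y')@[s]) = act n M ([]@[c,c]@z)" using z by simp
    also have "\<dots> = act n M z" using act_ss[OF assms(1) cn, of "[]" z] by simp
    finally have "length ((c#y')@[s]) \<le> length z" using red_le[OF Cons.prems(2) wz] by simp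
    moreover have "length (y'@[s]) = Suc (length z)" using arg_cong[OF z, of length] by simp
    ultimately show False by simp
  qed
  then show ?case using y' k_def by simp
qed

lemma braid_bound:
  assumes "egcm n M" "s < n" "t < n" "m \<ge> 1"
    and braid: "act n M (alt s t m) = act n M (alt t s m)"
    and r: "red n M (alt t s (Suc k))"
  shows "k < m"
proof (rule ccontr)
  assume "\<not> k < m"
  then obtain j where kj: "k = m + j" by (metis le_add_diff_inverse not_less)
  have ss: "act n M (u@[p,p]) = act n M u" if "p < n" for u p using act_ss'[OF assms(1) that] .
  have base1: "act n M (alt t s (Suc m)) = act n M (alt s t (m - 1))"
  proof -
    have e1: "alt t s (Suc m) = alt s t m @ [s]" by (rule alt_snoc)
    have e2: "alt t s m = alt s t (m-1) @ [s]" using alt_snoc[of t s "m-1"] assms(4) by simp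
    have "act n M (alt t s (Suc m)) = act n M (alt s t m) \<circ> act n M [s]" by (subst e1) (rule act_append_fun)
    also have "\<dots> = act n M (alt t s m) \<circ> act n M [s]" using braid by simp
    also have "\<dots> = act n M (alt s t (m-1) @ [s,s])" by (simp add: e2 act_append fun_eq_iff)
    also have "\<dots> = act n M (alt s t (m-1))" using ss assms(2) by simp
    finally show ?thesis .
  qed
  have base2: "act n M (alt s t (Suc m)) = act n M (alt t s (m - 1))"
  proof -
    have e1: "alt s t (Suc m) = alt t s m @ [t]" by (rule alt_snoc)
    have e2: "alt s t m = alt t s (m-1) @ [t]" using alt_snoc[of s t "m-1"] assms(4) by simp
    have "act n M (alt s t (Suc m)) = act n M (alt t s m) \<circ> act n M [t]" by (subst e1) (rule act_append_fun)
    also have "\<dots> = act n M (alt s t m) \<circ> act n M [t]" using braid by simp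
    also have "\<dots> = act n M (alt t s (m-1) @ [t,t])" by (simp add: e2 act_append fun_eq_iff)
    also have "\<dots> = act n M (alt t s (m-1))" using ss assms(3) by simp
    finally show ?thesis .
  qed
  have Q: "(\<exists>u. wd n u \<and> act n M u = act n M (alt t s (Suc (m + i))) \<and> length u + 2 \<le> Suc (m + i)) \<and>
           (\<exists>u. wd n u \<and> act n M u = act n M (alt s t (Suc (m + i))) \<and> length u + 2 \<le> Suc (m + i))" for i
  proof (induction i)
    case 0
    show ?case
    proof (intro conjI)
      show "\<exists>u. wd n u \<and> act n M u = act n M (alt t s (Suc (m + 0))) \<and> length u + 2 \<le> Suc (m + 0)"
        by (rule exI[of _ "alt s t (m-1)"]) (use base1 wd_alt[OF assms(2,3)] assms(4) in auto)
      show "\<exists>u. wd n u \<and> act n M u = act n M (alt s t (Suc (m + 0))) \<and> length u + 2 \<le> Suc (m + 0)"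
        by (rule exI[of _ "alt t s (m-1)"]) (use base2 wd_alt[OF assms(3,2)] assms(4) in auto)
    qed
  next
    case (Suc i)
    obtain u1 where u1: "wd n u1" "act n M u1 = act n M (alt t s (Suc (m + i)))" "length u1 + 2 \<le> Suc (m + i)"
      using Suc by blast
    obtain u2 where u2: "wd n u2" "act n M u2 = act n M (alt s t (Suc (m + i)))" "length u2 + 2 \<le> Suc (m + i)"
      using Suc by blast
    have eq1: "alt t s (Suc (m + Suc i)) = alt s t (Suc (m+i)) @ [s]" using alt_snoc[of t s "Suc (m+i)"] by simp
    have eq2: "alt s t (Suc (m + Suc i)) = alt t s (Suc (m+i)) @ [t]" using alt_snoc[of s t "Suc (m+i)"] by simp
    have a1: "act n M (u2@[s]) = act n M (alt t s (Suc (m + Suc i)))"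
      by (simp only: eq1 act_append_fun u2(2))
    have a2: "act n M (u1@[t]) = act n M (alt s t (Suc (m + Suc i)))"
      by (simp only: eq2 act_append_fun u1(2))
    show ?case
    proof (intro conjI)
      show "\<exists>u. wd n u \<and> act n M u = act n M (alt t s (Suc (m + Suc i))) \<and> length u + 2 \<le> Suc (m + Suc i)"
        by (rule exI[of _ "u2@[s]"]) (use a1 u2 assms(2) in auto)
      show "\<exists>u. wd n u \<and> act n M u = act n M (alt s t (Suc (m + Suc i))) \<and> length u + 2 \<le> Suc (m + Suc i)"
        by (rule exI[of _ "u1@[t]"]) (use a2 u1 assms(3) in auto)
    qed
  qed
  obtain u where u: "wd n u" "act n M u = act n M (alt t s (Suc k))" "length u + 2 \<le> Suc k"
    using Q[of j] kj by blast
  have "length (alt t s (Suc k)) \<le> length u" using red_le[OF r u(1) u(2)] .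
  then show False using u(3) by simp
qed

lemma sum_alpha: "j < (n::nat) \<Longrightarrow> (\<Sum>l<n. f l * alpha j l) = (f j :: real)"
proof -
  assume j: "j < n"
  have "(\<Sum>l<n. f l * alpha j l) = (\<Sum>l<n. if l = j then f l else 0)"
    by (rule sum.cong) (auto simp: alpha_def)
  also have "\<dots> = f j" using j by (simp add: sum.delta)
  finally show ?thesis .
qed

lemma sum_plane: "i < n \<Longrightarrow> j < n \<Longrightarrow> (\<Sum>l<n. f l * (c * alpha i l + d * alpha j l)) = c * f i + d * (f j :: real)"
proof -
  assume a: "i < n" "j < n"
  have "(\<Sum>l<n. f l * (c * alpha i l + d * alpha j l)) = c * (\<Sum>l<n. f l * alpha i l) + d * (\<Sum>l<n. f l * alpha j l)"
    by (simp add: algebra_simps sum.distrib sum_distrib_left)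
  then show ?thesis using a by (simp add: sum_alpha)
qed

lemma refl_plane:
  assumes "i < n" "j < n" "i \<noteq> j" "M i i = 2"
  shows "refl n M i (\<lambda>k. c * alpha i k + d * alpha j k) = (\<lambda>k. (- c - M i j * d) * alpha i k + d * alpha j k)"
proof (rule ext)
  fix k
  have s: "(\<Sum>l<n. M i l * (c * alpha i l + d * alpha j l)) = 2 * c + d * M i j"
    using sum_plane[OF assms(1,2), of "M i" c d] assms(4) by simp
  show "refl n M i (\<lambda>k. c * alpha i k + d * alpha j k) k = (- c - M i j * d) * alpha i k + d * alpha j k"
    using assms(3) by (simp only: refl_def s) (simp add: alpha_def algebra_simps)
qed

lemma coef:
  assumes "egcm n M" "s < n" "t < n" "s \<noteq> t"
  shows "act n M (alt s t k) (alpha s) = (\<lambda>l. fst (cdk (- M s t) (- M t s) k) * alpha s l + snd (cdk (- M s t) (- M t s) k) * alpha t l)"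
proof (induction k)
  case 0 then show ?case by (simp add: fun_eq_iff)
next
  case (Suc k)
  define c where "c = fst (cdk (- M s t) (- M t s) k)"
  define d where "d = snd (cdk (- M s t) (- M t s) k)"
  have ih: "act n M (alt s t k) (alpha s) = (\<lambda>l. d * alpha t l + c * alpha s l)"
    using Suc unfolding c_def d_def by (simp add: fun_eq_iff)
  have ih2: "act n M (alt s t k) (alpha s) = (\<lambda>l. c * alpha s l + d * alpha t l)"
    using Suc unfolding c_def d_def by simp
  show ?case
  proof (cases "even k")
    case True
    have "act n M (alt s t (Suc k)) (alpha s) = refl n M t (\<lambda>l. d * alpha t l + c * alpha s l)"
      using True ih by simp
    also have "\<dots> = (\<lambda>l. (- d - M t s * c) * alpha t l + c * alpha s l)"
      using refl_plane[where i=t and j=s and n=n and M=M] assms(3,2) assms(4) egcm_diag[OF assms(1,3)] by simp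
    finally show ?thesis using True unfolding c_def d_def by (simp add: fun_eq_iff algebra_simps)
  next
    case False
    have "act n M (alt s t (Suc k)) (alpha s) = refl n M s (\<lambda>l. c * alpha s l + d * alpha t l)"
      using False ih2 by simp
    also have "\<dots> = (\<lambda>l. (- c - M s t * d) * alpha s l + d * alpha t l)"
      using refl_plane[where i=s and j=t and n=n and M=M] assms(2,3) assms(4) egcm_diag[OF assms(1,2)] by simp
    finally show ?thesis using False unfolding c_def d_def by (simp add: fun_eq_iff algebra_simps)
  qed
qed

lemma braid_alpha:
  assumes "egcm n M" "s < n" "t < n" "s \<noteq> t" "m \<ge> 1"
    and h: "cdk (- M s t) (- M t s) m = (- fst (cdk (- M s t) (- M t s) (m - 1)), - snd (cdk (- M s t) (- M t s) (m - 1)))"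
  shows "act n M (alt s t m) (alpha s) = act n M (alt t s m) (alpha s)"
proof -
  have e2: "alt t s m = alt s t (m-1) @ [s]" using alt_snoc[of t s "m-1"] assms(5) by simp
  have "act n M (alt t s m) (alpha s) = act n M (alt s t (m-1)) (\<lambda>k. - alpha s k)"
    using refl_alpha_self[where i=s and n=n and M=M] assms(2) egcm_diag[OF assms(1,2)]
    by (simp add: e2 act_append)
  also have "\<dots> = (\<lambda>k. - act n M (alt s t (m-1)) (alpha s) k)" by (rule act_neg)
  finally show ?thesis using coef[OF assms(1-4)] h by (simp add: fun_eq_iff algebra_simps)
qed

lemma act_fix:
  assumes "set w \<subseteq> {s,t}" "(\<Sum>j<n. M s j * r j) = 0" "(\<Sum>j<n. M t j * r j) = 0"
  shows "act n M w r = r"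
  using assms(1)
proof (induction w)
  case Nil then show ?case by simp
next
  case (Cons i w)
  then have "act n M w r = r" "i = s \<or> i = t" by auto
  then show ?case using assms(2,3) by (auto simp: refl_def)
qed

lemma braid_full:
  assumes "egcm n M" "s < n" "t < n" "s \<noteq> t" "m \<ge> 1" "M s t * M t s \<noteq> 4"
    and h1: "act n M (alt s t m) (alpha s) = act n M (alt t s m) (alpha s)"
    and h2: "act n M (alt t s m) (alpha t) = act n M (alt s t m) (alpha t)"
  shows "act n M (alt s t m) = act n M (alt t s m)"
proof (rule ext)
  fix v
  define ph where "ph = (\<Sum>j<n. M s j * v j)"
  define ps where "ps = (\<Sum>j<n. M t j * v j)"
  define D where "D = 4 - M s t * M t s"
  have D: "D \<noteq> 0" using assms(6) unfolding D_def by simp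
  define c where "c = (2 * ph - M s t * ps) / D"
  define d where "d = (2 * ps - M t s * ph) / D"
  define p where "p = (\<lambda>k. c * alpha s k + d * alpha t k)"
  define r where "r = (\<lambda>k. v k - p k)"
  have mss: "M s s = 2" "M t t = 2" using egcm_diag[OF assms(1)] assms(2,3) by auto
  have cD: "c * D = 2 * ph - M s t * ps" using D unfolding c_def by simp
  have dD: "d * D = 2 * ps - M t s * ph" using D unfolding d_def by simp
  have fp1: "(\<Sum>j<n. M s j * p j) = ph"
  proof -
    have "(\<Sum>j<n. M s j * p j) = c * M s s + d * M s t"
      unfolding p_def using sum_plane[OF assms(2,3), of "M s" c d] by simp
    also have "\<dots> = ph"
    proof -
      have "(c * M s s + d * M s t) * D = 2 * (c * D) + M s t * (d * D)" using mss by (simp add: algebra_simps)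
      also have "\<dots> = ph * D" unfolding cD dD by (simp add: D_def algebra_simps)
      finally show ?thesis using D by simp
    qed
    finally show ?thesis .
  qed
  have fp2: "(\<Sum>j<n. M t j * p j) = ps"
  proof -
    have "(\<Sum>j<n. M t j * p j) = c * M t s + d * M t t"
      unfolding p_def using sum_plane[OF assms(2,3), of "M t" c d] by simp
    also have "\<dots> = ps"
    proof -
      have "(c * M t s + d * M t t) * D = M t s * (c * D) + 2 * (d * D)" using mss by (simp add: algebra_simps)
      also have "\<dots> = ps * D" unfolding cD dD by (simp add: D_def algebra_simps)
      finally show ?thesis using D by simp
    qed
    finally show ?thesis .
  qed
  have r1: "(\<Sum>j<n. M s j * r j) = 0"
    unfolding r_def using fp1 ph_def by (simp add: right_diff_distrib sum_subtractf)
  have r2: "(\<Sum>j<n. M t j * r j) = 0"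
    unfolding r_def using fp2 ps_def by (simp add: right_diff_distrib sum_subtractf)
  have v: "v = (\<lambda>k. 1 * p k + 1 * r k)" unfolding r_def by simp
  have gen: "act n M w v = (\<lambda>k. c * act n M w (alpha s) k + d * act n M w (alpha t) k + r k)"
    if "set w \<subseteq> {s,t}" for w
  proof -
    have "act n M w v = (\<lambda>k. 1 * act n M w p k + 1 * act n M w r k)"
      by (subst v) (rule act_lin)
    also have "act n M w r = r" by (rule act_fix[OF that r1 r2])
    also have "act n M w p = (\<lambda>k. c * act n M w (alpha s) k + d * act n M w (alpha t) k)"
      unfolding p_def by (rule act_lin)
    finally show ?thesis by simp
  qed
  have st: "set (alt t s m) \<subseteq> {s,t}" using alt_set[of t s m] by auto
  have g1: "act n M (alt s t m) v = (\<lambda>k. c * act n M (alt s t m) (alpha s) k + d * act n M (alt s t m) (alpha t) k + r k)"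
    by (rule gen[OF alt_set])
  have g2: "act n M (alt t s m) v = (\<lambda>k. c * act n M (alt t s m) (alpha s) k + d * act n M (alt t s m) (alpha t) k + r k)"
    by (rule gen[OF st])
  show "act n M (alt s t m) v = act n M (alt t s m) v"
    unfolding g1 g2 h1 h2 by (rule refl)
qed

lemma cos_lt4: assumes "m \<ge> (3::nat)" shows "4 * (cos (pi / real m))\<^sup>2 < 4"
proof -
  have "0 < pi / real m" "pi / real m < pi" using assms by (auto simp: field_simps)
  then have "sin (pi / real m) > 0" by (simp add: sin_gt_zero)
  then have "(sin (pi / real m))\<^sup>2 > 0" by simp
  then show ?thesis using sin_cos_squared_add[of "pi / real m"] by linarith
qed

lemma rank2:
  assumes "egcm n M" "s < n" "t < n" "s \<noteq> t" "set y \<subseteq> {s,t}" "red n M (y@[s])"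
  shows "\<exists>c d. c \<ge> 0 \<and> d \<ge> 0 \<and> act n M y (alpha s) = (\<lambda>k. c * alpha s k + d * alpha t k)"
proof -
  define k where "k = length y"
  have y: "y = alt s t k" using y_alt[OF assms(1-4) assms(5,6)] k_def by simp
  have r: "red n M (alt t s (Suc k))" using assms(6) y alt_snoc[of t s k] by simp
  define a where "a = - M s t"
  define b where "b = - M t s"
  have a0: "a \<ge> 0" "b \<ge> 0" using egcm_off[OF assms(1)] assms(2-4) unfolding a_def b_def by auto
  have ab: "a * b = M s t * M t s" unfolding a_def b_def by simp
  have sym: "M s t \<noteq> 0 \<longleftrightarrow> M t s \<noteq> 0" using assms(1-3) unfolding egcm_def by blast
  have braid_gen: "act n M (alt s t m) = act n M (alt t s m)"
    if m1: "m \<ge> 1" and ne4: "M s t * M t s \<noteq> 4"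
      and hab: "cdk a b m = (- fst (cdk a b (m - 1)), - snd (cdk a b (m - 1)))"
      and hba: "cdk b a m = (- fst (cdk b a (m - 1)), - snd (cdk b a (m - 1)))" for m
  proof (rule braid_full[OF assms(1-4) m1 ne4])
    show "act n M (alt s t m) (alpha s) = act n M (alt t s m) (alpha s)"
      by (rule braid_alpha[OF assms(1-4) m1]) (use hab in \<open>simp add: a_def b_def\<close>)
    show "act n M (alt t s m) (alpha t) = act n M (alt s t m) (alpha t)"
      by (rule braid_alpha[OF assms(1) assms(3,2) assms(4)[symmetric] m1]) (use hba in \<open>simp add: a_def b_def\<close>)
  qed
  have nn: "fst (cdk a b k) \<ge> 0 \<and> snd (cdk a b k) \<ge> 0"
  proof (cases "M s t * M t s = 0")
    case True
    then have z: "M s t = 0" "M t s = 0" using sym by auto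
    then have ab0: "a = 0" "b = 0" unfolding a_def b_def by auto
    have "act n M (alt s t 2) = act n M (alt t s 2)"
      by (rule braid_gen) (use z ab0 in \<open>simp_all add: numeral_2_eq_2\<close>)
    then have "k < 2" using braid_bound[OF assms(1-3) _ _ r] by simp
    then have "k = 0 \<or> k = 1" by auto
    then show ?thesis using ab0 by auto
  next
    case False
    then have "M s t * M t s \<ge> 4 \<or> (\<exists>m::nat. m \<ge> 3 \<and> M s t * M t s = 4 * (cos (pi / real m))\<^sup>2)"
      using assms(1-3) unfolding egcm_def by blast
    then show ?thesis
    proof
      assume "M s t * M t s \<ge> 4"
      then show ?thesis using cdk_nonneg_big[OF a0] ab by simp
    next
      assume "\<exists>m::nat. m \<ge> 3 \<and> M s t * M t s = 4 * (cos (pi / real m))\<^sup>2"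
      then obtain m :: nat where m: "m \<ge> 3" "M s t * M t s = 4 * (cos (pi / real m))\<^sup>2" by blast
      have ab': "a * b = 4 * (cos (pi / real m))\<^sup>2" "b * a = 4 * (cos (pi / real m))\<^sup>2" using m ab by (simp_all add: mult.commute)
      note c1 = cdk_cos[OF a0 m(1) ab'(1)]
      note c2 = cdk_cos[OF a0(2) a0(1) m(1) ab'(2)]
      have "act n M (alt s t m) = act n M (alt t s m)"
        by (rule braid_gen) (use m c1(2) c2(2) cos_lt4[OF m(1)] in auto)
      then have "k < m" using braid_bound[OF assms(1-3) _ _ r] m by simp
      then show ?thesis using c1(1) by blast
    qed
  qed
  show ?thesis using coef[OF assms(1-4), of k] y nn unfolding a_def b_def by blast
qed

lemma main:
  assumes "egcm n M"
  shows "\<forall>w s. length w = N \<longrightarrow> red n M (w@[s]) \<longrightarrow> (\<forall>k<n. act n M w (alpha s) k \<ge> 0)"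
proof (induction N rule: less_induct)
  case (less N)
  show ?case
  proof (intro allI impI)
    fix w s k assume lw: "length w = N" and rws: "red n M (w@[s])" and k: "k < n"
    have wdws: "wd n w" "s < n" using red_wd[OF rws] by auto
    have rw: "red n M w" using red_append[OF rws] by simp
    show "act n M w (alpha s) k \<ge> 0"
    proof (cases w rule: rev_exhaust)
      case Nil then show ?thesis by (simp add: alpha_def)
    next
      case (snoc w0 t)
      have tn: "t < n" "wd n w0" using wdws snoc by auto
      have ts: "t \<noteq> s"
      proof
        assume "t = s"
        then have "w@[s] = w0@[s,s]" using snoc by simp
        then have "act n M (w@[s]) = act n M w0" using act_ss'[OF assms wdws(2), of w0] by simp
        then have "length (w@[s]) \<le> length w0" using red_le[OF rws tn(2)] by simp
        then show False using snoc by simp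
      qed
      define P where "P = (\<lambda>(x,y). wd n x \<and> set y \<subseteq> {s,t} \<and> act n M (x@y) = act n M w \<and> length x + length y \<le> N)"
      have "P (w0,[t])" using snoc tn lw by (auto simp: P_def)
      obtain p where pP: "P p" and pmin: "\<forall>q. P q \<longrightarrow> length (fst p) \<le> length (fst q)"
        using ex_has_least_nat[where P=P and k="(w0,[t])" and m="\<lambda>p. length (fst p)"] \<open>P (w0,[t])\<close> by blast
      obtain x y where pxy: "p = (x,y)" by (cases p)
      have x: "wd n x" "set y \<subseteq> {s,t}" "act n M (x@y) = act n M w" "length x + length y \<le> N"
        using pP pxy by (auto simp: P_def)
      have wdy: "wd n y" using x(2) wdws tn by (auto simp: wd_def)
      have "length w \<le> length (x@y)" using red_le[OF rw _ x(3)] x(1) wdy by simp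
      then have lxy: "length x + length y = N" using x(4) lw by simp
      have rxy: "red n M (x@y)" using red_equiv[OF rw _ x(3)] x(1) wdy lxy lw by simp
      have rx: "red n M x" using red_append[OF rxy] by simp
      have "length x \<le> length w0" using pmin[rule_format, OF \<open>P (w0,[t])\<close>] pxy by simp
      then have xlt: "length x < N" using snoc lw by simp
      have rxr: "red n M (x@[r])" if r: "r \<in> {s,t}" for r
      proof (rule ccontr)
        assume nr: "\<not> red n M (x@[r])"
        have rn: "r < n" using r wdws tn by auto
        obtain u where u: "wd n u" "act n M u = act n M (x@[r])" "length u + 1 = length x"
          using parity_red[OF assms rx rn nr] by blast
        have "act n M (u@(r#y)) = act n M ((x@[r])@(r#y))" by (simp only: act_append_fun u(2))
        also have "\<dots> = act n M (x@[r,r]@y)" by simp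
        also have "\<dots> = act n M (x@y)" using act_ss[OF assms rn] by simp
        finally have "P (u, r#y)" using u x r rn lxy by (auto simp: P_def)
        then have "length x \<le> length u" using pmin[rule_format, of "(u, r#y)"] pxy by simp
        then show False using u(3) by simp
      qed
      have nx_s: "\<forall>k<n. act n M x (alpha s) k \<ge> 0" using less[OF xlt] rxr[of s] by blast
      have nx_t: "\<forall>k<n. act n M x (alpha t) k \<ge> 0" using less[OF xlt] rxr[of t] by blast
      have "act n M ((x@y)@[s]) = act n M (x@y) \<circ> act n M [s]" by (rule act_append_fun)
      also have "\<dots> = act n M w \<circ> act n M [s]" using x(3) by simp
      also have "\<dots> = act n M (w@[s])" by (rule act_append_fun[symmetric])
      finally have "act n M ((x@y)@[s]) = act n M (w@[s])" .
      then have "red n M (x@(y@[s]))" using red_equiv[OF rws] x(1) wdy wdws lxy lw by simp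
      then have rys: "red n M (y@[s])" using red_append by blast
      obtain c d where cd: "c \<ge> 0" "d \<ge> 0" "act n M y (alpha s) = (\<lambda>k. c * alpha s k + d * alpha t k)"
        using rank2[OF assms wdws(2) tn(1) ts[symmetric] x(2) rys] by blast
      have "act n M w (alpha s) = act n M x (act n M y (alpha s))"
        using x(3) by (metis act_append)
      also have "\<dots> = (\<lambda>k. c * act n M x (alpha s) k + d * act n M x (alpha t) k)"
        using cd(3) by (simp add: act_lin)
      finally show ?thesis using nx_s nx_t cd k by simp
    qed
  qed
qed

lemma dichotomy:
  assumes "egcm n M" "v \<in> roots n M"
  shows "(\<forall>k<n. v k \<ge> 0) \<or> (\<forall>k<n. v k \<le> 0)"
proof -
  obtain w i where wi: "wd n w" "i < n" "v = act n M w (alpha i)" using roots_act[OF assms(2)] by blast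
  obtain u where u: "red n M u" "act n M u = act n M w" using exists_red[OF wi(1)] by blast
  have v: "v = act n M u (alpha i)" using u wi by simp
  show ?thesis
  proof (cases "red n M (u@[i])")
    case True
    then show ?thesis using main[OF assms(1)] v by blast
  next
    case False
    obtain u' where u': "wd n u'" "act n M u' = act n M (u@[i])" "length u' + 1 = length u"
      using parity_red[OF assms(1) u(1) wi(2) False] by blast
    have "act n M (u'@[i]) = act n M ((u@[i])@[i])" by (simp only: act_append_fun u'(2))
    also have "\<dots> = act n M (u@[i,i])" by simp
    also have "\<dots> = act n M u" using act_ss'[OF assms(1) wi(2)] by simp
    finally have e: "act n M (u'@[i]) = act n M u" .
    then have "red n M (u'@[i])" using red_equiv[OF u(1)] u' wi(2) by simp
    then have pos: "\<forall>k<n. act n M u' (alpha i) k \<ge> 0" using main[OF assms(1)] by blast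
    have "v = act n M (u'@[i]) (alpha i)" using v e by simp
    also have "\<dots> = act n M u' (\<lambda>k. - alpha i k)"
      using refl_alpha_self[where i=i and n=n and M=M] wi(2) egcm_diag[OF assms(1) wi(2)] by (simp add: act_append)
    also have "\<dots> = (\<lambda>k. - act n M u' (alpha i) k)" by (rule act_neg)
    finally show ?thesis using pos by auto
  qed
qed


lemma propagate:
  assumes "egcm n M" "finite {v \<in> pos_roots n M. v k > 0}" "(k, j) \<in> egcm_edges n M"
  shows "finite {v \<in> pos_roots n M. v j > 0}"
proof -
  have kj: "k < n" "j < n" "k \<noteq> j" "M k j \<noteq> 0" using assms(3) by (auto simp: egcm_edges_def)
  have Mkj: "M k j < 0" using egcm_off[OF assms(1) kj(1,2,3)] kj(4) by simp
  have "{v \<in> pos_roots n M. v j > 0} \<subseteq> {v \<in> pos_roots n M. v k > 0} \<union> refl n M k ` {v \<in> pos_roots n M. v k > 0}"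
  proof
    fix b assume b: "b \<in> {v \<in> pos_roots n M. v j > 0}"
    then have br: "b \<in> roots n M" and bnn: "\<forall>l<n. b l \<ge> 0" and bj: "b j > 0" by (auto simp: pos_roots_def)
    show "b \<in> {v \<in> pos_roots n M. v k > 0} \<union> refl n M k ` {v \<in> pos_roots n M. v k > 0}"
    proof (cases "b k > 0")
      case True then show ?thesis using b by auto
    next
      case False
      then have bk: "b k = 0" using bnn kj(1) by force
      define g where "g = refl n M k b"
      have gr: "g \<in> roots n M" unfolding g_def using br kj(1) by (rule roots.reflect)
      have terms: "M k l * b l \<le> 0" if "l < n" for l
      proof (cases "l = k")
        case True then show ?thesis using bk by simp
      next
        case False then show ?thesis using egcm_off[OF assms(1) kj(1) that] bnn that
          by (simp add: mult_nonpos_nonneg)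
      qed
      have "(\<Sum>l<n. M k l * b l) = M k j * b j + (\<Sum>l\<in>{..<n} - {j}. M k l * b l)"
        using kj(2) by (simp add: sum.remove)
      also have "(\<Sum>l\<in>{..<n} - {j}. M k l * b l) \<le> 0" using terms by (intro sum_nonpos) auto
      moreover have "M k j * b j < 0" using Mkj bj by (simp add: mult_neg_pos)
      ultimately have neg: "(\<Sum>l<n. M k l * b l) < 0" by linarith
      have gk: "g k > 0" using neg bk by (simp add: g_def refl_def)
      have gl: "g l = b l" if "l \<noteq> k" for l using that by (simp add: g_def refl_def)
      have "\<forall>l<n. g l \<ge> 0" using gk gl bnn by (metis less_eq_real_def)
      then have "g \<in> {v \<in> pos_roots n M. v k > 0}" using gr gk by (simp add: pos_roots_def)
      moreover have "b = refl n M k g" unfolding g_def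
        using refl_invol[where i=k and n=n and M=M and v=b] egcm_diag[OF assms(1) kj(1)] kj(1) by simp
      ultimately show ?thesis by blast
    qed
  qed
  then show ?thesis using assms(2) by (rule finite_subset[OF _ finite_UnI[OF _ finite_imageI]]) (use assms(2) in auto)
qed

theorem proposition4p5:
  fixes n :: nat and M :: "nat \<Rightarrow> nat \<Rightarrow> real" and J :: "nat set"
  assumes "egcm n M"
    and "egcm_connected n M"
    and "infinite (roots n M)"
    and "J \<subset> {..<n}"
  shows "infinite {v \<in> pos_roots n M. v \<notin> span_simple J}"
proof
  assume fin: "finite {v \<in> pos_roots n M. v \<notin> span_simple J}"
  obtain k0 where k0: "k0 < n" "k0 \<notin> J" using assms(4) by blast
  have "{v \<in> pos_roots n M. v k0 > 0} \<subseteq> {v \<in> pos_roots n M. v \<notin> span_simple J}"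
  proof (safe)
    fix v assume "v k0 > 0" "v \<in> span_simple J"
    then obtain c where c: "v = (\<lambda>k. \<Sum>j\<in>J. c j * alpha j k)" by (auto simp: span_simple_def)
    have "v k0 = 0" unfolding c using k0(2) by (intro sum.neutral) (auto simp: alpha_def)
    then show False using \<open>v k0 > 0\<close> by simp
  qed
  then have f0: "finite {v \<in> pos_roots n M. v k0 > 0}" using fin by (rule finite_subset)
  have allfin: "finite {v \<in> pos_roots n M. v i > 0}" if "i < n" for i
  proof -
    have "(k0, i) \<in> (egcm_edges n M)\<^sup>*" using assms(2) k0(1) that by (simp add: egcm_connected_def)
    then show ?thesis
    proof (induction rule: rtrancl_induct)
      case base then show ?case by (rule f0)
    next
      case (step y z) then show ?case using propagate[OF assms(1)] by blast
    qed
  qed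
  have "pos_roots n M \<subseteq> (\<Union>i<n. {v \<in> pos_roots n M. v i > 0})"
  proof
    fix v assume "v \<in> pos_roots n M"
    then have "v \<in> roots n M" "\<forall>k<n. v k \<ge> 0" by (auto simp: pos_roots_def)
    then obtain k where "k < n" "v k > 0" using roots_pos_coord[OF assms(1)] by blast
    then show "v \<in> (\<Union>i<n. {v \<in> pos_roots n M. v i > 0})" using \<open>v \<in> pos_roots n M\<close> by blast
  qed
  moreover have "finite (\<Union>i<n. {v \<in> pos_roots n M. v i > 0})" using allfin by auto
  ultimately have fp: "finite (pos_roots n M)" by (rule finite_subset)
  have "roots n M \<subseteq> pos_roots n M \<union> (\<lambda>v k. - v k) ` pos_roots n M"
  proof
    fix v assume vr: "v \<in> roots n M"
    show "v \<in> pos_roots n M \<union> (\<lambda>v k. - v k) ` pos_roots n M"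
    proof (cases "\<forall>k<n. v k \<ge> 0")
      case True then show ?thesis using vr by (simp add: pos_roots_def)
    next
      case False
      then have "\<forall>k<n. v k \<le> 0" using dichotomy[OF assms(1) vr] by blast
      then have "(\<lambda>k. - v k) \<in> pos_roots n M" using roots_neg[OF assms(1) vr] by (simp add: pos_roots_def)
      then have "(\<lambda>k. - (\<lambda>k. - v k) k) \<in> (\<lambda>v k. - v k) ` pos_roots n M" by (rule imageI)
      then show ?thesis by simp
    qed
  qed
  then have "finite (roots n M)" using fp by (rule finite_subset[OF _ finite_UnI[OF _ finite_imageI]]) (use fp in auto)
  then show False using assms(3) by simp
qed

end
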